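(* Let $\zeta$ be the Riemann zeta function (meromorphically continued) and $\eta(s)=\sum_{n\ge1}(-1)^{n-1}n^{-s}$ the Dirichlet eta function. Define, for large real $x$, $g(x)=\bigl|\ln|\ln\eta(x)|\bigr|$ and $h(x)=\ln|\zeta(\eta(x))|$. Then for every integer $n\ge0$, $$\lim_{x\to\infty}\frac{g^{n}(x)}{x}=\lim_{x\to\infty}\frac{h^{n}(x)}{x}=(\ln2)^n,$$ where $g^{n},h^{n}$ denote $n$-th iterates. *)

theory Defs
  imports "HOL-Complex_Analysis.Complex_Analysis"
begin

definition eta :: "real \<Rightarrow> real" where
  "eta x = (\<Sum>n. (-1) ^ n / real (Suc n) powr x)"

text \<open>Domain {Re s > 0} minus the pole 1; a connected open set containing the
  half-plane Re s > 1, on which the meromorphic continuation of zeta is holomorphic.\<close>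
definition zeta_dom :: "complex set" where
  "zeta_dom = {s. 0 < Re s} - {1}"

text \<open>Riemann zeta function: the value at s of the (unique, by the identity theorem)
  holomorphic continuation to zeta_dom of the Dirichlet series sum n^(-s) (Re s > 1).
  This agrees with the meromorphic continuation of zeta on zeta_dom; outside zeta_dom
  the value is unspecified (not needed for the statement).\<close>
definition zeta :: "complex \<Rightarrow> complex" where
  "zeta s = (THE z. \<exists>f. f holomorphic_on zeta_dom \<and>
      (\<forall>w. 1 < Re w \<longrightarrow> f w = (\<Sum>n. 1 / (of_nat (Suc n)) powr w)) \<and> f s = z)"

definition g_fun :: "real \<Rightarrow> real" where
  "g_fun x = \<bar>ln \<bar>ln (eta x)\<bar>\<bar>"

definition h_fun :: "real \<Rightarrow> real" where
  "h_fun x = ln (cmod (zeta (complex_of_real (eta x))))"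

end

theory Submission
  imports Defs
begin

lemma a_bound:
  fixes s :: complex and m :: real
  assumes m: "m \<ge> 1" and s1: "s \<noteq> 1" and s0: "Re s \<ge> 0"
  shows "cmod (of_real m powr (-s) - (of_real (m+1) powr (1-s) - of_real m powr (1-s))/(1-s))
           \<le> cmod s * m powr (-Re s - 1)"
proof -
  define S :: "complex set" where "S = {z. Re z \<ge> m} \<inter> {z. Re z \<le> m+1} \<inter> {z. Im z \<ge> 0} \<inter> {z. Im z \<le> 0}"
  have cvx: "convex S" unfolding S_def
    by (intro convex_Int convex_halfspace_Re_ge convex_halfspace_Re_le convex_halfspace_Im_ge convex_halfspace_Im_le)
  have Sr: "z = of_real (Re z) \<and> Re z \<ge> m \<and> Re z \<le> m+1" if "z \<in> S" for z
    using that unfolding S_def by (auto simp: complex_eq_iff)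
  have nonpos: "z \<notin> \<real>\<^sub>\<le>\<^sub>0" if "z \<in> S" for z
    using Sr[OF that] m by (auto simp: complex_nonpos_Reals_iff)
  have mS: "of_real m \<in> S" and m1S: "of_real (m+1) \<in> S" unfolding S_def by auto
  have B1: "cmod (z powr (-s) - of_real m powr (-s)) \<le> cmod s * m powr (-Re s - 1)" if z: "z \<in> S" for z
  proof -
    have "cmod (z powr (-s) - of_real m powr (-s)) \<le> (cmod s * m powr (-Re s - 1)) * cmod (z - of_real m)"
    proof (rule field_differentiable_bound[OF cvx, where f="\<lambda>z. z powr (-s)" and f'="\<lambda>z. -s * z powr (-s-1)"])
      fix w assume w: "w \<in> S"
      show "((\<lambda>z. z powr (-s)) has_field_derivative (-s * w powr (-s-1))) (at w within S)"
        using has_field_derivative_powr[OF nonpos[OF w], of "-s"] has_field_derivative_at_within by blast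
      have "cmod (w powr (-s-1)) = Re w powr (- Re s - 1)"
        using Sr[OF w] m by (subst norm_powr_real_powr) (auto, metis Reals_of_real)
      also have "\<dots> \<le> m powr (- Re s - 1)"
        using Sr[OF w] m s0 by (intro powr_mono2') auto
      finally show "cmod (-s * w powr (-s-1)) \<le> cmod s * m powr (-Re s - 1)"
        by (simp add: norm_mult mult_left_mono)
    qed (use z mS in auto)
    also have "z - of_real m = of_real (Re z - m)" using Sr[OF z] by (metis of_real_diff)
    then have "cmod (z - of_real m) \<le> 1" using Sr[OF z] by (simp del: of_real_diff)
    then have "(cmod s * m powr (-Re s - 1)) * cmod (z - of_real m) \<le> cmod s * m powr (-Re s - 1)"
      by (simp add: mult_left_le)
    finally show ?thesis .
  qed
  define \<psi> where "\<psi> = (\<lambda>z. z powr (1-s) / (1-s) - z * of_real m powr (-s))"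
  have "cmod (\<psi> (of_real (m+1)) - \<psi> (of_real m)) \<le> (cmod s * m powr (-Re s - 1)) * cmod (of_real (m+1) - of_real m :: complex)"
  proof (rule field_differentiable_bound[OF cvx, where f=\<psi> and f'="\<lambda>z. z powr (-s) - of_real m powr (-s)"])
    fix w assume w: "w \<in> S"
    have "((\<lambda>z. z powr (1-s)) has_field_derivative ((1-s) * w powr (-s))) (at w)"
      using has_field_derivative_powr[OF nonpos[OF w], of "1-s"] by simp
    then have "(\<psi> has_field_derivative (w powr (-s) - of_real m powr (-s))) (at w)"
    proof -
      have "(\<psi> has_field_derivative ((1-s) * w powr (-s) / (1-s) - 1 * of_real m powr (-s))) (at w)"
        unfolding \<psi>_def by (intro DERIV_diff DERIV_cdivide DERIV_cmult_right) (rule \<open>(_ has_field_derivative _) _\<close>, rule DERIV_ident)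
      moreover have "(1-s) * w powr (-s) / (1-s) - 1 * of_real m powr (-s) = w powr (-s) - of_real m powr (-s)"
        using s1 by simp
      ultimately show ?thesis by simp
    qed
    then show "(\<psi> has_field_derivative (w powr (-s) - of_real m powr (-s))) (at w within S)"
      using has_field_derivative_at_within by blast
  qed (use B1 mS m1S in auto)
  moreover have "\<psi> (of_real (m+1)) - \<psi> (of_real m) = -(of_real m powr (-s) - (of_real (m+1) powr (1-s) - of_real m powr (1-s))/(1-s))"
    unfolding \<psi>_def by (simp add: diff_divide_distrib algebra_simps)
  moreover have "cmod (of_real(m+1) - of_real m :: complex) = 1" by simp
  ultimately show ?thesis by (metis mult.right_neutral norm_minus_cancel)
qed


definition za :: "nat \<Rightarrow> complex \<Rightarrow> complex" where
  "za n s = of_nat (Suc n) powr (-s) - (of_nat (Suc (Suc n)) powr (1-s) - of_nat (Suc n) powr (1-s))/(1-s)"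

definition Z :: "complex \<Rightarrow> complex" where
  "Z s = 1/(s-1) + (\<Sum>n. za n s)"

lemma za_bound:
  assumes "s \<noteq> 1" "Re s \<ge> 0"
  shows "cmod (za n s) \<le> cmod s * real (Suc n) powr (-Re s - 1)"
proof -
  have e1: "complex_of_real (real (Suc n)) = of_nat (Suc n)" by (rule of_real_of_nat_eq)
  have e2: "complex_of_real (real (Suc n) + 1) = of_nat (Suc (Suc n))" by simp
  have "1 \<le> real (Suc n)" by simp
  from a_bound[of "real (Suc n)" s, OF this assms] show ?thesis unfolding za_def e1 e2 .
qed

lemma open_zeta_dom: "open zeta_dom"
  unfolding zeta_dom_def by (intro open_Diff open_halfspace_Re_gt) auto

lemma Z_holo: "Z holomorphic_on zeta_dom"
proof -
  have hs: "(\<lambda>s. \<Sum>i<N. za i s) holomorphic_on zeta_dom" for N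
    unfolding za_def zeta_dom_def by (intro holomorphic_intros) auto
  have "(\<lambda>s. \<Sum>n. za n s) holomorphic_on zeta_dom"
  proof (rule holomorphic_uniform_sequence[OF open_zeta_dom hs])
    fix x assume x: "x \<in> zeta_dom"
    define d where "d = min (Re x / 2) (cmod (x - 1) / 2)"
    have x0: "Re x > 0" and x1: "x \<noteq> 1" using x unfolding zeta_dom_def by auto
    have d0: "d > 0" unfolding d_def using x0 x1 by auto
    have yprops: "Re y \<ge> Re x / 2 \<and> y \<noteq> 1 \<and> cmod y \<le> cmod x + d" if y: "y \<in> cball x d" for y
    proof -
      have dy: "cmod (x - y) \<le> d" using y by (simp add: dist_norm)
      have "Re x - Re y \<le> cmod (x - y)" using abs_Re_le_cmod[of "x-y"] by auto
      then have "Re y \<ge> Re x / 2" using dy unfolding d_def by auto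
      moreover have "y \<noteq> 1" using dy x1 unfolding d_def by auto
      moreover have "cmod y \<le> cmod x + d" using dy norm_triangle_ineq3[of x y] by (simp add: norm_minus_commute) 
      ultimately show ?thesis by auto
    qed
    have sub: "cball x d \<subseteq> zeta_dom"
    proof
      fix y assume "y \<in> cball x d"
      from yprops[OF this] x0 show "y \<in> zeta_dom" unfolding zeta_dom_def by auto
    qed
    define M where "M = (\<lambda>n. (cmod x + d) * real (Suc n) powr (-(Re x / 2) - 1))"
    have sM: "summable M"
    proof -
      have "summable (\<lambda>n. real n powr (-(Re x / 2) - 1))"
        using x0 by (subst summable_real_powr_iff) auto
      then have "summable (\<lambda>n. real (Suc n) powr (-(Re x / 2) - 1))"
        using summable_Suc_iff[of "\<lambda>n. real n powr (-(Re x / 2) - 1)"] by simp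
      then show ?thesis unfolding M_def by (rule summable_mult)
    qed
    have bM: "cmod (za n y) \<le> M n" if y: "y \<in> cball x d" for n y
    proof -
      from yprops[OF y] have y0: "Re y \<ge> 0" using x0 by linarith
      have "cmod (za n y) \<le> cmod y * real (Suc n) powr (-Re y - 1)"
        using za_bound yprops[OF y] y0 by blast
      also have "\<dots> \<le> (cmod x + d) * real (Suc n) powr (-(Re x / 2) - 1)"
        using yprops[OF y] d0 by (intro mult_mono powr_mono) auto
      finally show ?thesis unfolding M_def .
    qed
    show "\<exists>d>0. cball x d \<subseteq> zeta_dom \<and> uniform_limit (cball x d) (\<lambda>N s. \<Sum>i<N. za i s) (\<lambda>s. \<Sum>n. za n s) sequentially"
      by (rule exI[of _ d], intro conjI d0 sub Weierstrass_m_test[OF bM sM])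
  qed
  moreover have "(\<lambda>s. 1/(s-1)) holomorphic_on zeta_dom" unfolding zeta_dom_def by (intro holomorphic_intros) auto
  ultimately have "(\<lambda>s. 1/(s-1) + (\<Sum>n. za n s)) holomorphic_on zeta_dom"
    by (intro holomorphic_on_add)
  then show ?thesis unfolding Z_def[abs_def] .
qed

lemma Z_dirichlet:
  assumes w: "Re w > 1"
  shows "Z w = (\<Sum>n. 1 / (of_nat (Suc n)) powr w)"
proof -
  define p where "p = (\<lambda>n. of_nat (Suc n) powr (-w) :: complex)"
  define T where "T = (\<lambda>n. of_nat (Suc n) powr (1-w) :: complex)"
  have np: "norm (p n) = real (Suc n) powr (- Re w)" for n
    unfolding p_def using norm_powr_real_powr[of "of_nat (Suc n)" "-w"] by simp
  have "summable (\<lambda>n. real n powr (- Re w))"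
    using w by (subst summable_real_powr_iff) auto
  then have "summable (\<lambda>n. real (Suc n) powr (- Re w))"
    using summable_Suc_iff[of "\<lambda>n. real n powr (- Re w)"] by simp
  then have "summable (\<lambda>n. norm (p n))" by (simp only: np)
  from summable_norm_cancel[OF this] have ps: "p sums (\<Sum>n. p n)" by (rule summable_sums)
  have "T \<longlonglongrightarrow> 0" unfolding T_def
    using w by (intro tendsto_neg_powr_complex_of_nat filterlim_Suc) auto
  from telescope_sums[OF this] have "(\<lambda>n. T (Suc n) - T n) sums (0 - T 0)" .
  moreover have "T 0 = 1" unfolding T_def by simp
  ultimately have "(\<lambda>n. T (Suc n) - T n) sums (- 1)" by simp
  then have ts: "(\<lambda>n. (T (Suc n) - T n) / (1 - w)) sums (- 1 / (1 - w))"
    by (rule sums_divide)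
  have s1: "(\<lambda>n. p n - (T (Suc n) - T n) / (1 - w)) sums ((\<Sum>n. p n) - (- 1 / (1 - w)))"
    by (rule sums_diff[OF ps ts])
  have "(\<lambda>n. za n w) = (\<lambda>n. p n - (T (Suc n) - T n) / (1 - w))"
    unfolding za_def p_def T_def by (rule refl)
  with s1 have "(\<lambda>n. za n w) sums ((\<Sum>n. p n) - (- 1 / (1 - w)))" by simp
  then have e1: "(\<Sum>n. za n w) = (\<Sum>n. p n) - (- 1 / (1 - w))" by (rule sums_unique[symmetric])
  have e2: "(\<Sum>n. p n) = (\<Sum>n. 1 / (of_nat (Suc n)) powr w)"
    unfolding p_def by (rule arg_cong[where f=suminf], rule ext, rule powr_minus_divide)
  have wn: "w - 1 \<noteq> 0" "1 - w \<noteq> 0" using w by auto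
  have e3: "1 / (w - 1) - (- 1 / (1 - w)) = (0::complex)"
    using wn by (simp add: field_simps)
  have "Z w = (\<Sum>n. p n) + (1 / (w - 1) - (- 1 / (1 - w)))"
    unfolding Z_def e1 by (simp only: algebra_simps)
  then show ?thesis unfolding e3 e2 by simp
qed


lemma connected_zeta_dom: "connected zeta_dom"
  unfolding zeta_dom_def
  by (intro connected_open_delete open_halfspace_Re_gt convex_connected convex_halfspace_Re_gt) auto

lemma zeta_eq_Z:
  assumes s: "s \<in> zeta_dom"
  shows "zeta s = Z s"
  unfolding zeta_def
proof (rule the_equality)
  show "\<exists>f. f holomorphic_on zeta_dom \<and> (\<forall>w. 1 < Re w \<longrightarrow> f w = (\<Sum>n. 1 / (of_nat (Suc n)) powr w)) \<and> f s = Z s"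
    using Z_holo Z_dirichlet by blast
next
  fix z assume "\<exists>f. f holomorphic_on zeta_dom \<and> (\<forall>w. 1 < Re w \<longrightarrow> f w = (\<Sum>n. 1 / (of_nat (Suc n)) powr w)) \<and> f s = z"
  then obtain f where hf: "f holomorphic_on zeta_dom" and fd: "\<And>w. 1 < Re w \<Longrightarrow> f w = (\<Sum>n. 1 / (of_nat (Suc n)) powr w)"
    and fs: "f s = z" by blast
  have "f s - Z s = 0"
  proof (rule analytic_continuation[where f="\<lambda>w. f w - Z w" and U="{w. 1 < Re w}" and \<xi>=2 and w=s and S=zeta_dom])
    show "(\<lambda>w. f w - Z w) holomorphic_on zeta_dom" using hf Z_holo by (intro holomorphic_on_diff)
    show "open zeta_dom" by (rule open_zeta_dom)
    show "connected zeta_dom" by (rule connected_zeta_dom)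
    show "{w. 1 < Re w} \<subseteq> zeta_dom" unfolding zeta_dom_def by auto
    show "2 \<in> zeta_dom" unfolding zeta_dom_def by auto
    have "2 \<in> interior {w. 1 < Re w}" by (simp add: interior_open open_halfspace_Re_gt)
    then show "2 islimpt {w. 1 < Re w}" by (rule interior_limit_point)
    show "\<And>w. w \<in> {w. 1 < Re w} \<Longrightarrow> f w - Z w = 0" using fd Z_dirichlet by auto
    show "s \<in> zeta_dom" by (rule s)
  qed
  then show "z = Z s" using fs by simp
qed

definition zr :: "nat \<Rightarrow> real \<Rightarrow> real" where
  "zr n s = real (Suc n) powr (-s) - (real (Suc (Suc n)) powr (1-s) - real (Suc n) powr (1-s))/(1-s)"

lemma powr_nat_real: "(of_nat k :: complex) powr (of_real y) = of_real (real k powr y)"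
  by (metis of_real_of_nat_eq powr_of_real of_nat_0_le_iff)

lemma za_real: "za n (of_real s) = of_real (zr n s)"
proof -
  have h1: "(of_nat k :: complex) powr (- of_real s) = of_real (real k powr (-s))" for k
    using powr_nat_real[of k "-s"] by simp
  have h2: "(of_nat k :: complex) powr (1 - of_real s) = of_real (real k powr (1-s))" for k
    using powr_nat_real[of k "1-s"] by simp
  show ?thesis unfolding za_def zr_def h1 h2 by simp
qed

lemma zr_bounds:
  assumes s: "0 < s" "s < 1"
  shows "0 \<le> zr n s \<and> zr n s \<le> real (Suc n) powr (-s) - real (Suc (Suc n)) powr (-s)"
proof -
  define m where "m = real (Suc n)"
  have m1: "m \<ge> 1" unfolding m_def by simp
  have d: "DERIV (\<lambda>x. x powr (1-s)) x :> (1-s) * x powr (1-s-1)" if "m \<le> x" for x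
    using has_real_derivative_powr[of x "1-s"] that m1 by simp
  obtain z where z: "m < z" "z < m+1" and eq: "(m+1) powr (1-s) - m powr (1-s) = (m + 1 - m) * ((1-s) * z powr (1-s-1))"
    using MVT2[of m "m+1" "\<lambda>x. x powr (1-s)" "\<lambda>x. (1-s) * x powr (1-s-1)"] d by auto
  have q: "((m+1) powr (1-s) - m powr (1-s)) / (1-s) = z powr (-s)"
    using eq s by simp
  have "z powr (-s) \<le> m powr (-s)" using z m1 s by (intro powr_mono2') auto
  moreover have "(m+1) powr (-s) \<le> z powr (-s)" using z m1 s by (intro powr_mono2') auto
  moreover have e: "real (Suc (Suc n)) = m + 1" unfolding m_def by simp
  moreover have "zr n s = m powr (-s) - ((m+1) powr (1-s) - m powr (1-s))/(1-s)"
    unfolding zr_def e unfolding m_def by simp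
  ultimately show ?thesis unfolding q e m_def[symmetric] by simp
qed

lemma Z_real_bounds:
  assumes s: "0 < s" "s < 1"
  shows "1/(1-s) - 1 \<le> cmod (Z (of_real s)) \<and> cmod (Z (of_real s)) \<le> 1/(1-s)"
proof -
  define t where "t = (\<lambda>n. real (Suc n) powr (-s) - real (Suc (Suc n)) powr (-s))"
  have "(\<lambda>n. real (Suc n) powr (-s)) \<longlonglongrightarrow> 0"
    using s by (intro tendsto_neg_powr filterlim_compose[OF filterlim_real_sequentially filterlim_Suc]) auto
  from telescope_sums'[OF this] have ts: "t sums 1" unfolding t_def by simp
  have zb: "\<And>n. 0 \<le> zr n s" "\<And>n. zr n s \<le> t n" using zr_bounds[OF s] unfolding t_def by auto
  have sz: "summable (\<lambda>n. zr n s)"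
    by (rule summable_comparison_test'[where g=t]) (use ts zb in \<open>auto simp: sums_iff\<close>)
  define F where "F = (\<Sum>n. zr n s)"
  have F0: "0 \<le> F" unfolding F_def using sz zb by (intro suminf_nonneg) auto
  have F1: "F \<le> 1" unfolding F_def using suminf_le[of "\<lambda>n. zr n s" t] sz ts zb by (auto simp: sums_iff)
  have "(\<Sum>n. za n (of_real s)) = (\<Sum>n. of_real (zr n s))" by (simp add: za_real)
  also have "\<dots> = of_real F" unfolding F_def by (rule suminf_of_real[OF sz, symmetric])
  finally have "Z (of_real s) = of_real (1/(s-1) + F)" unfolding Z_def by simp
  moreover have "1/(complex_of_real s - 1) + of_real F = of_real (1/(s-1) + F)" by simp
  ultimately have "cmod (Z (of_real s)) = \<bar>1/(s-1) + F\<bar>" by (simp only: norm_of_real)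
  moreover have "1/(s-1) = - (1/(1-s))" using s by (simp add: field_simps)
  moreover have "1/(1-s) \<ge> 1" using s by (simp add: field_simps)
  ultimately show ?thesis using F0 F1 by auto
qed


lemma eta_bounds:
  assumes x: "x > 0"
  shows "1 - 2 powr (-x) \<le> eta x \<and> eta x \<le> 1 - 2 powr (-x) + 3 powr (-x)"
proof -
  define a where "a = (\<lambda>n. real (Suc n) powr (-x))"
  have a0: "a \<longlonglongrightarrow> 0" unfolding a_def
    using x by (intro tendsto_neg_powr filterlim_compose[OF filterlim_real_sequentially filterlim_Suc]) auto
  have ap: "\<And>n. 0 \<le> a n" unfolding a_def by simp
  have am: "\<And>n. a (Suc n) \<le> a n" unfolding a_def using x by (intro powr_mono2') auto
  have e: "eta x = (\<Sum>i. (-1)^i * a i)"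
    unfolding eta_def a_def by (rule suminf_cong) (simp add: powr_minus_divide)
  note L = summable_Leibniz'[OF a0 ap am]
  have l: "(\<Sum>i<2*1. (-1)^i*a i) \<le> (\<Sum>i. (-1)^i*a i)" by (rule L(2))
  have u: "(\<Sum>i. (-1)^i*a i) \<le> (\<Sum>i<2*1+1. (-1)^i*a i)" by (rule L(4))
  have s2: "(\<Sum>i<2*1. (-1)^i*a i) = 1 - 2 powr (-x)" unfolding a_def by (simp add: numeral_2_eq_2)
  have s3: "(\<Sum>i<2*1+1. (-1)^i*a i) = 1 - 2 powr (-x) + 3 powr (-x)" unfolding a_def
    by (simp add: numeral_3_eq_3 numeral_2_eq_2)
  show ?thesis using l u unfolding s2 s3 e by simp
qed

lemma u_bounds:
  assumes x: "x \<ge> 2"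
  shows "(5/9) / (2 powr x) \<le> 1 - eta x \<and> 1 - eta x \<le> 1 / (2 powr x) \<and> 4 \<le> 2 powr x"
proof -
  have E: "4 \<le> 2 powr x"
  proof -
    have "(2::real) powr 2 \<le> 2 powr x" using x by (intro powr_mono) auto
    then show ?thesis by simp
  qed
  have p3: "3 powr (-x) = (3/2) powr (-x) * 2 powr (-x)"
    by (subst powr_mult[symmetric]) auto
  have "(3/2::real) powr (-x) \<le> (3/2) powr (-2)" using x by (intro powr_mono) auto
  also have "(3/2::real) powr (-2) = 4/9" by (simp add: powr_minus power2_eq_square inverse_eq_divide)
  finally have "3 powr (-x) \<le> 4/9 * 2 powr (-x)" unfolding p3 by (simp add: mult_right_mono)
  moreover have "2 powr (-x) = 1 / 2 powr x" by (rule powr_minus_divide)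
  moreover note eta_bounds[of x] x
  ultimately show ?thesis using E by auto
qed

lemma ln_small: "ln (4/3::real) \<le> 1" "ln (9/5::real) \<le> 1"
  using ln_le_minus_one[of "4/3::real"] ln_le_minus_one[of "9/5::real"] by auto

lemma g_bound:
  assumes x: "x \<ge> 2"
  shows "\<bar>g_fun x - ln 2 * x\<bar> \<le> 1"
proof -
  define E where "E = (2::real) powr x"
  define u where "u = 1 - eta x"
  from u_bounds[OF x] have ub: "(5/9) / E \<le> u" "u \<le> 1 / E" "4 \<le> E" unfolding E_def u_def by auto
  have E0: "E > 0" using ub(3) by simp
  have "(5/9)/E > 0" using E0 by simp
  then have u0: "u > 0" using ub(1) by linarith
  have "1/E \<le> 1/4" using ub(3) by (intro divide_left_mono) auto
  then have u4: "u \<le> 1/4" using ub(2) by linarith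
  have lnE: "ln E = ln 2 * x" unfolding E_def by (simp add: ln_powr)
  have eta: "eta x = 1 - u" unfolding u_def by simp
  define L where "L = - ln (1 - u)"
  have Ll: "u \<le> L" unfolding L_def using ln_le_minus_one[of "1-u"] u4 by auto
  have "ln (1/(1-u)) \<le> 1/(1-u) - 1" using u4 by (intro ln_le_minus_one) auto
  then have "L \<le> 1/(1-u) - 1" unfolding L_def using u4 by (simp add: ln_div)
  also have "1/(1-u) - 1 = u / (1-u)" using u4 by (simp add: field_simps)
  also have "\<dots> \<le> u / (3/4)" using u4 u0 by (intro divide_left_mono) auto
  finally have Lu: "L \<le> (4/3) * u" by simp
  have L0: "L > 0" using Ll u0 by simp
  have abs: "\<bar>ln (eta x)\<bar> = L" unfolding eta L_def using u4 u0 by (simp add: abs_if)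
  have lnL1: "ln L \<le> ln (4/3) - ln E"
  proof -
    have "ln L \<le> ln ((4/3) * (1/E))" using Lu ub L0 by (intro ln_mono) auto
    also have "\<dots> = ln (4/3) + ln (1/E)" by (rule ln_mult_pos) (use E0 in auto)
    also have "ln (1/E) = - ln E" using E0 by (simp add: ln_div)
    finally show ?thesis by simp
  qed
  have lnL2: "ln L \<ge> ln (5/9) - ln E"
  proof -
    have "ln L \<ge> ln ((5/9) / E)" using Ll ub u0 by (intro ln_mono) auto
    also have "ln ((5/9) / E) = ln (5/9) - ln E" by (rule ln_divide_pos) (use E0 in auto)
    finally show ?thesis by simp
  qed
  have "ln L < 0" using Lu u4 L0 by (subst ln_less_zero_iff) auto
  then have "g_fun x = - ln L" unfolding g_fun_def abs by simp
  moreover have "ln (5/9::real) = - ln (9/5)" by (simp add: ln_div)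
  ultimately show ?thesis using lnL1 lnL2 ln_small lnE by auto
qed

lemma h_bound:
  assumes x: "x \<ge> 2"
  shows "\<bar>h_fun x - ln 2 * x\<bar> \<le> 1"
proof -
  define E where "E = (2::real) powr x"
  define u where "u = 1 - eta x"
  from u_bounds[OF x] have ub: "(5/9) / E \<le> u" "u \<le> 1 / E" "4 \<le> E" unfolding E_def u_def by auto
  have E0: "E > 0" using ub(3) by simp
  have "(5/9)/E > 0" using E0 by simp
  then have u0: "u > 0" using ub(1) by linarith
  have "1/E \<le> 1/4" using ub(3) by (intro divide_left_mono) auto
  then have u4: "u \<le> 1/4" using ub(2) by linarith
  have lnE: "ln E = ln 2 * x" unfolding E_def by (simp add: ln_powr)
  have s: "0 < eta x" "eta x < 1" using u0 u4 unfolding u_def by auto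
  have dom: "complex_of_real (eta x) \<in> zeta_dom" unfolding zeta_dom_def using s by auto
  define A where "A = cmod (zeta (complex_of_real (eta x)))"
  have "1/(1 - eta x) - 1 \<le> A \<and> A \<le> 1/(1 - eta x)"
    unfolding A_def zeta_eq_Z[OF dom] by (rule Z_real_bounds[OF s])
  then have Ab: "1/u - 1 \<le> A" "A \<le> 1/u" unfolding u_def by auto
  have "1/u - 1 = (1-u)/u" using u0 by (simp add: field_simps)
  also have "\<dots> \<ge> (3/4)/u" using u0 u4 by (intro divide_right_mono) auto
  finally have Al1: "(3/4)/u \<le> 1/u - 1" .
  have "E \<le> 1/u" using ub(2) u0 E0 by (simp add: field_simps)
  then have "(3/4) * E \<le> (3/4) * (1/u)" by (intro mult_left_mono) auto
  then have Al: "(3/4) * E \<le> A" using Al1 Ab by simp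
  have "1/u \<le> (9/5) * E" using ub(1) u0 E0 by (simp add: field_simps)
  then have Au: "A \<le> (9/5) * E" using Ab by simp
  have A0: "A > 0" using Al ub by simp
  have "ln A \<le> ln ((9/5) * E)" using Au A0 by (intro ln_mono) auto
  moreover have "ln ((9/5) * E) = ln (9/5) + ln E" by (rule ln_mult_pos) (use E0 in auto)
  ultimately have h1: "ln A \<le> ln (9/5) + ln E" by simp
  have "ln A \<ge> ln ((3/4) * E)" using Al ub by (intro ln_mono) auto
  moreover have "ln ((3/4) * E) = ln (3/4) + ln E" by (rule ln_mult_pos) (use E0 in auto)
  ultimately have h2: "ln A \<ge> ln (3/4) + ln E" by simp
  have "ln (3/4::real) = - ln (4/3)" by (simp add: ln_div)
  then show ?thesis using h1 h2 ln_small lnE unfolding h_fun_def A_def[symmetric] by auto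
qed

lemma lim_of_bounded:
  fixes f :: "real \<Rightarrow> real"
  assumes b: "\<And>x. x \<ge> 2 \<Longrightarrow> \<bar>f x - c * x\<bar> \<le> 1"
  shows "((\<lambda>x. f x / x) \<longlongrightarrow> c) at_top"
proof (rule real_tendsto_sandwich[where f="\<lambda>x. c - inverse x" and h="\<lambda>x. c + inverse x"])
  have ev2: "eventually (\<lambda>x. x \<ge> (2::real)) at_top" by (rule eventually_ge_at_top)
  then show "eventually (\<lambda>x. c - inverse x \<le> f x / x) at_top"
  proof eventually_elim
    case (elim x)
    note 1 = elim
    then have "c * x - 1 \<le> f x" using b[of x] by auto
    then have "(c * x - 1) / x \<le> f x / x" using 1 by (intro divide_right_mono) auto
    moreover have "(c * x - 1) / x = c - inverse x" using 1 by (simp add: field_simps)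
    ultimately show ?case by simp
  qed
  from ev2 show "eventually (\<lambda>x. f x / x \<le> c + inverse x) at_top"
  proof eventually_elim
    case (elim x)
    note 2 = elim
    then have "f x \<le> c * x + 1" using b[of x] by auto
    then have "f x / x \<le> (c * x + 1) / x" using 2 by (intro divide_right_mono) auto
    moreover have "(c * x + 1) / x = c + inverse x" using 2 by (simp add: field_simps)
    ultimately show ?case by simp
  qed
  show "((\<lambda>x. c - inverse x) \<longlongrightarrow> c) at_top"
    using tendsto_diff[OF tendsto_const[of c] tendsto_inverse_0_at_top[OF filterlim_ident]] by simp
  show "((\<lambda>x. c + inverse x) \<longlongrightarrow> c) at_top"
    using tendsto_add[OF tendsto_const[of c] tendsto_inverse_0_at_top[OF filterlim_ident]] by simp
qed

lemma iterate_lim: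
  fixes f :: "real \<Rightarrow> real"
  assumes lim: "((\<lambda>x. f x / x) \<longlongrightarrow> c) at_top" and c: "c > 0"
  shows "((\<lambda>x. (f ^^ n) x / x) \<longlongrightarrow> c ^ n) at_top"
proof (induction n)
  case 0
  have "eventually (\<lambda>x. 1 = (f ^^ 0) x / x) at_top"
    using eventually_gt_at_top[of "0::real"] by eventually_elim simp
  have "((\<lambda>x. 1::real) \<longlongrightarrow> 1) at_top" by simp
  from Lim_transform_eventually[OF this \<open>eventually _ _\<close>] show ?case by simp
next
  case (Suc n)
  define G where "G = f ^^ n"
  have IH: "((\<lambda>x. G x / x) \<longlongrightarrow> c ^ n) at_top" using Suc.IH unfolding G_def .
  have fl: "filterlim (\<lambda>x. G x / x * x) at_top at_top"
    by (rule filterlim_tendsto_pos_mult_at_top[OF IH]) (use c in \<open>auto intro: filterlim_ident\<close>)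
  have ev: "eventually (\<lambda>x. G x / x * x = G x) at_top"
    using eventually_gt_at_top[of "0::real"] by eventually_elim simp
  have Gt: "filterlim G at_top at_top" using filterlim_cong[OF refl refl ev] fl by simp
  have fG: "((\<lambda>x. f (G x) / G x) \<longlongrightarrow> c) at_top" by (rule filterlim_compose[OF lim Gt])
  have prod: "((\<lambda>x. f (G x) / G x * (G x / x)) \<longlongrightarrow> c * c ^ n) at_top" by (rule tendsto_mult[OF fG IH])
  have "eventually (\<lambda>x. f (G x) / G x * (G x / x) = (f ^^ Suc n) x / x) at_top"
    using filterlim_at_top_dense[THEN iffD1, OF Gt, rule_format, of 0] by eventually_elim (simp add: G_def)
  from Lim_transform_eventually[OF prod this] show ?case by simp
qed

theorem mainTheorem9:
  fixes n :: nat
  shows "((\<lambda>x. (g_fun ^^ n) x / x) \<longlongrightarrow> (ln 2) ^ n) at_top \<and>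
         ((\<lambda>x. (h_fun ^^ n) x / x) \<longlongrightarrow> (ln 2) ^ n) at_top"
proof
  have g: "((\<lambda>x. g_fun x / x) \<longlongrightarrow> ln 2) at_top" by (rule lim_of_bounded[OF g_bound])
  have h: "((\<lambda>x. h_fun x / x) \<longlongrightarrow> ln 2) at_top" by (rule lim_of_bounded[OF h_bound])
  show "((\<lambda>x. (g_fun ^^ n) x / x) \<longlongrightarrow> (ln 2) ^ n) at_top" by (rule iterate_lim[OF g]) simp
  show "((\<lambda>x. (h_fun ^^ n) x / x) \<longlongrightarrow> (ln 2) ^ n) at_top" by (rule iterate_lim[OF h]) simp
qed

end
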